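(* Let $\Omega\subset\mathbb R^d$ be a bounded Borel set, $f:\Omega\to[0,\infty)$ with $\int_\Omega f=1$, $p\ge1$, $x_1,\dots,x_k\in\Omega$, and $h_1,\dots,h_k:[0,1]\to[0,\infty)$ differentiable in $]0,1]$ and continuous at $0$, such that $\eta_i(t)=t\,h_i(t)$ is convex for each $i$. Then there exists at most one partition $(A_i)_{i=1}^k$ of $\Omega$ (up to $f$-negligible sets) such that for every $i$, with $c_j=\int_{A_j}f\,dx$, $$A_i=\big\{x\in\Omega:\ |x-x_i|^p+h_i(c_i)+c_ih_i'(c_i)<|x-x_j|^p+h_j(c_j)+c_jh_j'(c_j)\ \ \forall j\ne i\big\}$$ up to $f$-negligible sets.
   Context: A partition of $\Omega$ is a family of Borel sets pairwise disjoint up to $f$-negligible sets whose union has full $f\,dx$-measure. "Differentiable in $]0,1]$" means differentiable on $]0,1[$ with a left derivative at $1$; the convention $0\cdot h_i'(0)=0$ is used. *)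

theory Defs
  imports "HOL-Analysis.Analysis"
begin

definition f_negligible :: "'a::euclidean_space set \<Rightarrow> ('a \<Rightarrow> real) \<Rightarrow> 'a set \<Rightarrow> bool" where
  "f_negligible \<Omega> f S \<longleftrightarrow> (\<integral>\<^sup>+ x \<in> S \<inter> \<Omega>. ennreal (f x) \<partial>lebesgue) = 0"

definition f_sym_negligible :: "'a::euclidean_space set \<Rightarrow> ('a \<Rightarrow> real) \<Rightarrow> 'a set \<Rightarrow> 'a set \<Rightarrow> bool" where
  "f_sym_negligible \<Omega> f S T \<longleftrightarrow> f_negligible \<Omega> f ((S - T) \<union> (T - S))"

definition f_partition :: "'a::euclidean_space set \<Rightarrow> ('a \<Rightarrow> real) \<Rightarrow> nat \<Rightarrow> (nat \<Rightarrow> 'a set) \<Rightarrow> bool" where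
  "f_partition \<Omega> f k A \<longleftrightarrow>
     (\<forall>i<k. A i \<in> sets borel) \<and>
     (\<forall>i<k. \<forall>j<k. i \<noteq> j \<longrightarrow> f_negligible \<Omega> f (A i \<inter> A j)) \<and>
     f_negligible \<Omega> f (\<Omega> - (\<Union>i<k. A i))"

text \<open>Derivative of h on ]0,1] (two-sided in the interior, left derivative at 1).\<close>
definition dh :: "(real \<Rightarrow> real) \<Rightarrow> real \<Rightarrow> real" where
  "dh h c = (THE D. (h has_real_derivative D) (at c within {0<..1}))"

definition marg :: "(real \<Rightarrow> real) \<Rightarrow> real \<Rightarrow> real" where
  "marg h c = h c + (if c = 0 then 0 else c * dh h c)"

definition mass :: "'a::euclidean_space set \<Rightarrow> ('a \<Rightarrow> real) \<Rightarrow> 'a set \<Rightarrow> real" where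
  "mass \<Omega> f S = (LINT x:(S \<inter> \<Omega>)|lebesgue. f x)"

end

theory Submission
  imports Defs
begin


lemma at_ne_bot_01:
  fixes c :: real assumes "0 < c" "c \<le> 1"
  shows "at c within {0<..1} \<noteq> bot"
proof
  assume b: "at c within {0<..1} = bot"
  have "at c within {c/2..c} \<le> at c within {0<..1}"
    using assms by (intro at_le) auto
  hence "at c within {c/2..c} = bot" using b by (simp add: bot_unique)
  moreover have "at c within {c/2..c} = at_left c"
    using assms by (intro at_within_Icc_at_left) auto
  ultimately show False by simp
qed

lemma dh_works:
  assumes "\<forall>t\<in>{0<..1}. h differentiable (at t within {0<..1})" "0 < c" "c \<le> (1::real)"
  shows "(h has_real_derivative dh h c) (at c within {0<..1})"
proof -
  obtain D where D: "(h has_real_derivative D) (at c within {0<..1})"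
    using assms real_differentiable_def by fastforce
  have "dh h c = D" unfolding dh_def
    by (rule the_equality[where P="\<lambda>D. (h has_real_derivative D) (at c within {0<..1})", OF D])
       (use D has_field_derivative_unique at_ne_bot_01 assms in blast)
  thus ?thesis using D by simp
qed

lemma left_slope_le:
  fixes \<eta> :: "real \<Rightarrow> real"
  assumes cvx: "convex_on {0..1} \<eta>" and D: "(\<eta> has_real_derivative D) (at t within {0<..1})"
    and st: "0 < s" "s < t" "t \<le> 1"
  shows "(\<eta> t - \<eta> s) / (t - s) \<le> D"
proof -
  have "(\<eta> has_real_derivative D) (at t within {s..t})"
    using D by (rule DERIV_subset) (use st in auto)
  hence lim: "((\<lambda>y. (\<eta> y - \<eta> t) / (y - t)) \<longlongrightarrow> D) (at_left t)"
    using st by (simp add: has_field_derivative_iff at_within_Icc_at_left)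
  have ev: "eventually (\<lambda>z. (\<eta> t - \<eta> s) / (t - s) \<le> (\<eta> z - \<eta> t) / (z - t)) (at_left t)"
    using eventually_at_left_real[OF st(2)]
  proof eventually_elim
    case (elim z)
    have "(\<eta> s - \<eta> t) / (s - t) \<le> (\<eta> z - \<eta> t) / (z - t)"
      using convex_on_slope_le(2)[OF cvx, of s t z] elim st by auto
    moreover have "(\<eta> s - \<eta> t) / (s - t) = (\<eta> t - \<eta> s) / (t - s)"
      using minus_divide_divide[of "\<eta> t - \<eta> s" "t - s"] by simp
    ultimately show ?case by simp
  qed
  show ?thesis
    by (rule tendsto_lowerbound[OF lim ev]) simp
qed

lemma marg_mono:
  fixes h :: "real \<Rightarrow> real"
  assumes diff: "\<forall>t\<in>{0<..1}. h differentiable (at t within {0<..1})"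
    and cont0: "continuous (at 0 within {0..1}) h"
    and cvx: "convex_on {0..1} (\<lambda>t. t * h t)"
    and st: "0 \<le> s" "s \<le> t" "t \<le> 1"
  shows "marg h s \<le> marg h t"
proof -
  define \<eta> where "\<eta> = (\<lambda>t::real. t * h t)"
  have cvx': "convex_on {0..1} \<eta>" using cvx by (simp add: \<eta>_def)
  have der: "(\<eta> has_real_derivative marg h c) (at c within {0<..1})" if "0 < c" "c \<le> 1" for c
  proof -
    have "(\<eta> has_real_derivative (1 * h c + c * dh h c)) (at c within {0<..1})"
      unfolding \<eta>_def using DERIV_mult[OF DERIV_ident dh_works[OF diff that]] by (simp add: mult.commute)
    thus ?thesis using that by (simp add: marg_def)
  qed
  have hmono: "h a \<le> h b" if "0 < a" "a < b" "b \<le> 1" for a b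
  proof -
    have "\<eta> ((1 - a/b) *\<^sub>R 0 + (a/b) *\<^sub>R b) \<le> (1 - a/b) * \<eta> 0 + (a/b) * \<eta> b"
      by (rule convex_onD[OF cvx']) (use that in auto)
    moreover have "(1 - a/b) *\<^sub>R 0 + (a/b) *\<^sub>R b = a" using that by simp
    ultimately have "a * h a \<le> a * h b" using that by (simp add: \<eta>_def)
    thus ?thesis using that by simp
  qed
  have h0: "h 0 \<le> h b" if "0 < b" "b \<le> 1" for b
  proof -
    have "(h \<longlongrightarrow> h 0) (at 0 within {0..1})"
      using cont0 by (simp add: continuous_within)
    hence lim: "(h \<longlongrightarrow> h 0) (at_right 0)" by (simp add: at_within_Icc_at_right)
    have "eventually (\<lambda>z. h z \<le> h b) (at_right 0)"
      using eventually_at_right_real[OF that(1)] by eventually_elim (use hmono that in auto)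
    thus ?thesis by (rule tendsto_upperbound[OF lim]) simp
  qed
  have Dh: "h b \<le> marg h b" if "0 < b" "b \<le> 1" for b
  proof -
    have "(\<eta> b - \<eta> (b/2)) / (b - b/2) \<le> marg h b"
      by (rule left_slope_le[OF cvx' der[OF that]]) (use that in auto)
    moreover have "h (b/2) \<le> h b" using hmono that by auto
    hence "(b - b/2) * h b \<le> \<eta> b - \<eta> (b/2)"
    proof -
      have "b * h (b/2) \<le> b * h b" using \<open>h (b/2) \<le> h b\<close> that by simp
      thus ?thesis by (simp add: \<eta>_def algebra_simps)
    qed
    hence "h b \<le> (\<eta> b - \<eta> (b/2)) / (b - b/2)" using that by (simp add: le_divide_eq mult.commute)
    ultimately show ?thesis by linarith
  qed
  show ?thesis
  proof (cases "s = t")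
    case True thus ?thesis by simp
  next
    case False
    hence st': "s < t" using st by simp
    show ?thesis
    proof (cases "s = 0")
      case True
      hence "marg h s = h 0" by (simp add: marg_def)
      thus ?thesis using h0[of t] Dh[of t] st' st True by linarith
    next
      case False
      hence s0: "0 < s" using st by simp
      have "marg h s * (t - s) \<le> \<eta> t - \<eta> s"
        by (rule convex_on_imp_above_tangent[where A="{0<..1}"])
           (use convex_on_subset[OF cvx' greaterThanAtMost_subseteq_atLeastAtMost_iff[THEN iffD2]] der[of s] s0 st st' in auto)
      hence "marg h s \<le> (\<eta> t - \<eta> s) / (t - s)" using st' by (simp add: le_divide_eq)
      also have "\<dots> \<le> marg h t"
        by (rule left_slope_le[OF cvx' der]) (use s0 st st' in auto)
      finally show ?thesis .
    qed
  qed
qed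



lemma borel_lebesgue: "S \<in> sets borel \<Longrightarrow> S \<in> sets lebesgue"
  by (metis sets_completionI_sets sets_lborel)

lemma cell_borel:
  fixes \<Omega> :: "'a::euclidean_space set" and x :: "nat \<Rightarrow> 'a" and w :: "nat \<Rightarrow> real"
  assumes "\<Omega> \<in> sets borel"
  shows "{y\<in>\<Omega>. \<forall>j<k. j \<noteq> i \<longrightarrow> norm (y - x i) powr p + w i < norm (y - x j) powr p + w j} \<in> sets borel"
proof -
  have "\<forall>j. Measurable.pred borel (\<lambda>y. j < k \<longrightarrow> j \<noteq> i \<longrightarrow> norm (y - x i) powr p + w i < norm (y - x j) powr p + w j)"
    by measurable
  hence "Measurable.pred borel (\<lambda>y. \<forall>j. j < k \<longrightarrow> j \<noteq> i \<longrightarrow> norm (y - x i) powr p + w i < norm (y - x j) powr p + w j)"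
    by (intro pred_intros_countable(1)) auto
  thus ?thesis using assms by measurable
qed

context
  fixes \<Omega> :: "'a::euclidean_space set" and f :: "'a \<Rightarrow> real"
  assumes \<Omega>_borel: "\<Omega> \<in> sets borel"
    and f_nonneg: "\<forall>y\<in>\<Omega>. f y \<ge> 0"
    and f_int: "set_integrable lebesgue \<Omega> f"
begin

definition "gg x = ennreal (indicator \<Omega> x * f x)"
definition "MM = density lebesgue gg"

lemma gg_meas: "gg \<in> borel_measurable lebesgue"
proof -
  have "(\<lambda>x. indicator \<Omega> x *\<^sub>R f x) \<in> borel_measurable lebesgue"
    using f_int unfolding set_integrable_def by (rule borel_measurable_integrable)
  thus ?thesis unfolding gg_def by simp
qed

lemma sets_MM[simp]: "sets MM = sets lebesgue" by (simp add: MM_def)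

lemma negl_iff:
  assumes "S \<in> sets lebesgue"
  shows "f_negligible \<Omega> f S \<longleftrightarrow> emeasure MM S = 0"
proof -
  have "emeasure MM S = (\<integral>\<^sup>+ x. gg x * indicator S x \<partial>lebesgue)"
    unfolding MM_def by (rule emeasure_density[OF gg_meas assms])
  also have "\<dots> = (\<integral>\<^sup>+ x \<in> S \<inter> \<Omega>. ennreal (f x) \<partial>lebesgue)"
    by (rule nn_integral_cong) (auto simp: gg_def indicator_def)
  finally show ?thesis unfolding f_negligible_def by simp
qed

lemma mass_eq:
  assumes "S \<in> sets lebesgue"
  shows "ennreal (mass \<Omega> f S) = emeasure MM S" and "mass \<Omega> f S \<ge> 0"
proof -
  have \<Omega>L: "\<Omega> \<in> sets lebesgue" using \<Omega>_borel by (rule borel_lebesgue)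
  have si: "set_integrable lebesgue (S \<inter> \<Omega>) f"
    by (rule set_integrable_subset[OF f_int]) (use assms \<Omega>L in auto)
  hence int: "integrable lebesgue (\<lambda>x. indicator (S \<inter> \<Omega>) x *\<^sub>R f x)"
    unfolding set_integrable_def .
  have nn: "\<And>x. 0 \<le> indicator (S \<inter> \<Omega>) x *\<^sub>R f x" using f_nonneg by (auto simp: indicator_def)
  have "ennreal (mass \<Omega> f S) = (\<integral>\<^sup>+ x. ennreal (indicator (S \<inter> \<Omega>) x *\<^sub>R f x) \<partial>lebesgue)"
    unfolding mass_def set_lebesgue_integral_def
    by (rule nn_integral_eq_integral[OF int, symmetric]) (use nn in auto)
  also have "\<dots> = (\<integral>\<^sup>+ x. gg x * indicator S x \<partial>lebesgue)"
    by (rule nn_integral_cong) (auto simp: gg_def indicator_def)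
  also have "\<dots> = emeasure MM S"
    unfolding MM_def by (rule emeasure_density[OF gg_meas assms, symmetric])
  finally show "ennreal (mass \<Omega> f S) = emeasure MM S" .
  show "mass \<Omega> f S \<ge> 0" unfolding mass_def set_lebesgue_integral_def
    using nn by (rule integral_nonneg_AE[OF AE_I2])
qed

lemma mass_mono:
  assumes "S \<in> sets lebesgue" "T \<in> sets lebesgue" "emeasure MM (S - T) = 0"
  shows "mass \<Omega> f S \<le> mass \<Omega> f T"
proof -
  have "emeasure MM S \<le> emeasure MM ((S - T) \<union> T)"
    by (rule emeasure_mono) (use assms in auto)
  also have "\<dots> \<le> emeasure MM (S - T) + emeasure MM T"
    by (rule emeasure_subadditive) (use assms in auto)
  finally have "ennreal (mass \<Omega> f S) \<le> ennreal (mass \<Omega> f T)"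
    using assms mass_eq by simp
  thus ?thesis using mass_eq(2)[OF assms(2)] by simp
qed

lemma null_sub2:
  assumes "S \<subseteq> T1 \<union> T2" "S \<in> sets lebesgue" "T1 \<in> sets lebesgue" "T2 \<in> sets lebesgue"
    "emeasure MM T1 = 0" "emeasure MM T2 = 0"
  shows "emeasure MM S = 0"
proof -
  have "emeasure MM S \<le> emeasure MM (T1 \<union> T2)"
    by (rule emeasure_mono) (use assms in auto)
  also have "\<dots> \<le> emeasure MM T1 + emeasure MM T2"
    by (rule emeasure_subadditive) (use assms in auto)
  finally show ?thesis using assms by simp
qed

lemma key:
  fixes k :: nat and x :: "nat \<Rightarrow> 'a" and p :: real and h :: "nat \<Rightarrow> real \<Rightarrow> real"
    and A B :: "nat \<Rightarrow> 'a set"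
  assumes f_one: "(LINT y:\<Omega>|lebesgue. f y) = 1"
    and mono: "\<forall>i<k. \<forall>s t. 0 \<le> s \<longrightarrow> s \<le> t \<longrightarrow> t \<le> 1 \<longrightarrow> marg (h i) s \<le> marg (h i) t"
    and Ab: "\<forall>i<k. A i \<in> sets borel" and Bb: "\<forall>i<k. B i \<in> sets borel"
    and A_eq: "\<forall>i<k. f_sym_negligible \<Omega> f (A i)
                 {y\<in>\<Omega>. \<forall>j<k. j \<noteq> i \<longrightarrow>
                    norm (y - x i) powr p + marg (h i) (mass \<Omega> f (A i))
                    < norm (y - x j) powr p + marg (h j) (mass \<Omega> f (A j))}"
    and B_eq: "\<forall>i<k. f_sym_negligible \<Omega> f (B i)
                 {y\<in>\<Omega>. \<forall>j<k. j \<noteq> i \<longrightarrow>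
                    norm (y - x i) powr p + marg (h i) (mass \<Omega> f (B i))
                    < norm (y - x j) powr p + marg (h j) (mass \<Omega> f (B j))}"
    and i: "i < k"
    and mind: "\<forall>j<k. marg (h j) (mass \<Omega> f (B j)) - marg (h j) (mass \<Omega> f (A j))
                  \<ge> marg (h i) (mass \<Omega> f (B i)) - marg (h i) (mass \<Omega> f (A i))"
  shows "marg (h i) (mass \<Omega> f (A i)) \<le> marg (h i) (mass \<Omega> f (B i))"
proof -
  define wA where "wA j = marg (h j) (mass \<Omega> f (A j))" for j
  define wB where "wB j = marg (h j) (mass \<Omega> f (B j))" for j
  define cA where "cA = {y\<in>\<Omega>. \<forall>j<k. j \<noteq> i \<longrightarrow> norm (y - x i) powr p + wA i < norm (y - x j) powr p + wA j}"
  define cB where "cB = {y\<in>\<Omega>. \<forall>j<k. j \<noteq> i \<longrightarrow> norm (y - x i) powr p + wB i < norm (y - x j) powr p + wB j}"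
  have sub: "cA \<subseteq> cB"
  proof
    fix y assume y: "y \<in> cA"
    have "norm (y - x i) powr p + wB i < norm (y - x j) powr p + wB j" if "j < k" "j \<noteq> i" for j
    proof -
      have "norm (y - x i) powr p + wA i < norm (y - x j) powr p + wA j"
        using y that unfolding cA_def by auto
      moreover have "wB j - wA j \<ge> wB i - wA i" using mind that unfolding wA_def wB_def by auto
      ultimately show ?thesis by linarith
    qed
    thus "y \<in> cB" using y unfolding cA_def cB_def by auto
  qed
  have cAL: "cA \<in> sets lebesgue" unfolding cA_def by (intro borel_lebesgue cell_borel \<Omega>_borel)
  have cBL: "cB \<in> sets lebesgue" unfolding cB_def by (intro borel_lebesgue cell_borel \<Omega>_borel)
  have AL: "A i \<in> sets lebesgue" using Ab i borel_lebesgue by auto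
  have BL: "B i \<in> sets lebesgue" using Bb i borel_lebesgue by auto
  have nA: "emeasure MM ((A i - cA) \<union> (cA - A i)) = 0"
  proof -
    have "f_sym_negligible \<Omega> f (A i) cA" using A_eq[rule_format, OF i] unfolding cA_def wA_def .
    moreover have "(A i - cA) \<union> (cA - A i) \<in> sets lebesgue" using AL cAL by blast
    ultimately show ?thesis unfolding f_sym_negligible_def using negl_iff by blast
  qed
  have nB: "emeasure MM ((B i - cB) \<union> (cB - B i)) = 0"
  proof -
    have "f_sym_negligible \<Omega> f (B i) cB" using B_eq[rule_format, OF i] unfolding cB_def wB_def .
    moreover have "(B i - cB) \<union> (cB - B i) \<in> sets lebesgue" using BL cBL by blast
    ultimately show ?thesis unfolding f_sym_negligible_def using negl_iff by blast
  qed
  have "emeasure MM (A i - B i) = 0"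
    by (rule null_sub2[OF _ _ _ _ nA nB]) (use sub AL BL cAL cBL in auto)
  hence ab: "mass \<Omega> f (A i) \<le> mass \<Omega> f (B i)" by (rule mass_mono[OF AL BL])
  have a0: "0 \<le> mass \<Omega> f (A i)" by (rule mass_eq(2)[OF AL])
  have "mass \<Omega> f (B i) \<le> mass \<Omega> f UNIV"
    by (rule mass_mono[OF BL]) auto
  also have "mass \<Omega> f UNIV = 1" using f_one by (simp add: mass_def)
  finally have b1: "mass \<Omega> f (B i) \<le> 1" .
  show ?thesis using mono i ab a0 b1 by auto
qed



lemma sym_trans:
  assumes SL: "S \<in> sets lebesgue" and TL: "T \<in> sets lebesgue" and CL: "C \<in> sets lebesgue"
    and SC: "f_sym_negligible \<Omega> f S C" and TC: "f_sym_negligible \<Omega> f T C"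
  shows "f_sym_negligible \<Omega> f S T"
proof -
  have L1: "(S - C) \<union> (C - S) \<in> sets lebesgue" using SL CL by (intro sets.Un sets.Diff)
  have L2: "(T - C) \<union> (C - T) \<in> sets lebesgue" using TL CL by (intro sets.Un sets.Diff)
  have L3: "(S - T) \<union> (T - S) \<in> sets lebesgue" using SL TL by (intro sets.Un sets.Diff)
  have "emeasure MM ((S - C) \<union> (C - S)) = 0"
    using SC negl_iff[OF L1] unfolding f_sym_negligible_def by simp
  moreover have "emeasure MM ((T - C) \<union> (C - T)) = 0"
    using TC negl_iff[OF L2] unfolding f_sym_negligible_def by simp
  ultimately have "emeasure MM ((S - T) \<union> (T - S)) = 0"
    by (intro null_sub2[OF _ L3 L1 L2]) auto
  thus ?thesis unfolding f_sym_negligible_def using negl_iff[OF L3] by simp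
qed

end

theorem lemma3p6:
  fixes \<Omega> :: "'a::euclidean_space set" and f :: "'a \<Rightarrow> real" and p :: real
    and k :: nat and x :: "nat \<Rightarrow> 'a" and h :: "nat \<Rightarrow> real \<Rightarrow> real"
    and A B :: "nat \<Rightarrow> 'a set"
  assumes \<Omega>_borel: "\<Omega> \<in> sets borel" and \<Omega>_bdd: "bounded \<Omega>"
    and f_nonneg: "\<forall>y\<in>\<Omega>. f y \<ge> 0"
    and f_int: "set_integrable lebesgue \<Omega> f"
    and f_one: "(LINT y:\<Omega>|lebesgue. f y) = 1"
    and p: "p \<ge> 1"
    and x_in: "\<forall>i<k. x i \<in> \<Omega>"
    and h_nonneg: "\<forall>i<k. \<forall>t\<in>{0..1}. h i t \<ge> 0"
    and h_diff: "\<forall>i<k. \<forall>t\<in>{0<..1}. h i differentiable (at t within {0<..1})"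
    and h_cont0: "\<forall>i<k. continuous (at 0 within {0..1}) (h i)"
    and h_convex: "\<forall>i<k. convex_on {0..1} (\<lambda>t. t * h i t)"
    and A_part: "f_partition \<Omega> f k A"
    and A_eq: "\<forall>i<k. f_sym_negligible \<Omega> f (A i)
                 {y\<in>\<Omega>. \<forall>j<k. j \<noteq> i \<longrightarrow>
                    norm (y - x i) powr p + marg (h i) (mass \<Omega> f (A i))
                    < norm (y - x j) powr p + marg (h j) (mass \<Omega> f (A j))}"
    and B_part: "f_partition \<Omega> f k B"
    and B_eq: "\<forall>i<k. f_sym_negligible \<Omega> f (B i)
                 {y\<in>\<Omega>. \<forall>j<k. j \<noteq> i \<longrightarrow>
                    norm (y - x i) powr p + marg (h i) (mass \<Omega> f (B i))
                    < norm (y - x j) powr p + marg (h j) (mass \<Omega> f (B j))}"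
  shows "\<forall>i<k. f_sym_negligible \<Omega> f (A i) (B i)"
proof -
  have mono: "\<forall>i<k. \<forall>s t. 0 \<le> s \<longrightarrow> s \<le> t \<longrightarrow> t \<le> 1 \<longrightarrow> marg (h i) s \<le> marg (h i) t"
  proof (intro allI impI)
    fix i and s t :: real assume i: "i < k" and st: "0 \<le> s" "s \<le> t" "t \<le> 1"
    show "marg (h i) s \<le> marg (h i) t"
      by (rule marg_mono[OF h_diff[THEN spec, THEN mp, OF i] h_cont0[rule_format, OF i] h_convex[rule_format, OF i] st])
  qed
  have Ab: "\<forall>i<k. A i \<in> sets borel" using A_part by (simp add: f_partition_def)
  have Bb: "\<forall>i<k. B i \<in> sets borel" using B_part by (simp add: f_partition_def)
  define wA where "wA j = marg (h j) (mass \<Omega> f (A j))" for j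
  define wB where "wB j = marg (h j) (mass \<Omega> f (B j))" for j
  define d where "d j = wB j - wA j" for j
  show ?thesis
  proof (cases "k = 0")
    case True thus ?thesis by simp
  next
    case False
    have fin: "finite (d ` {..<k})" "d ` {..<k} \<noteq> {}" using False by auto
    obtain i0 where i0: "i0 < k" "d i0 = Min (d ` {..<k})" using Min_in[OF fin] by auto
    obtain i1 where i1: "i1 < k" "d i1 = Max (d ` {..<k})" using Max_in[OF fin] by auto
    have mn: "\<forall>j<k. d i0 \<le> d j" using i0 fin by simp
    have mx: "\<forall>j<k. d j \<le> d i1" using i1 fin by simp
    have "wA i0 \<le> wB i0"
      unfolding wA_def wB_def
      by (rule key[OF \<Omega>_borel f_nonneg f_int f_one mono Ab Bb A_eq B_eq i0(1)])
         (use mn in \<open>unfold d_def wA_def wB_def\<close>)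
    hence ge: "\<forall>j<k. wA j \<le> wB j"
    proof (intro allI impI)
      fix j assume "j < k" "wA i0 \<le> wB i0"
      hence "d i0 \<le> d j" using mn by simp
      thus "wA j \<le> wB j" using \<open>wA i0 \<le> wB i0\<close> unfolding d_def by linarith
    qed
    have "wB i1 \<le> wA i1"
      unfolding wA_def wB_def
    proof (rule key[OF \<Omega>_borel f_nonneg f_int f_one mono Bb Ab B_eq A_eq i1(1)], intro allI impI)
      fix j assume "j < k"
      hence "d j \<le> d i1" using mx by simp
      thus "marg (h i1) (mass \<Omega> f (A i1)) - marg (h i1) (mass \<Omega> f (B i1))
         \<le> marg (h j) (mass \<Omega> f (A j)) - marg (h j) (mass \<Omega> f (B j))"
        unfolding d_def wA_def wB_def by linarith
    qed
    hence le: "\<forall>j<k. wB j \<le> wA j"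
    proof (intro allI impI)
      fix j assume "j < k" "wB i1 \<le> wA i1"
      hence "d j \<le> d i1" using mx by simp
      thus "wB j \<le> wA j" using \<open>wB i1 \<le> wA i1\<close> unfolding d_def by linarith
    qed
    have eq: "\<forall>j<k. wA j = wB j" using ge le by (meson order_antisym)
    show ?thesis
    proof (intro allI impI)
      fix i assume i: "i < k"
      define C where "C = {y\<in>\<Omega>. \<forall>j<k. j \<noteq> i \<longrightarrow> norm (y - x i) powr p + wA i < norm (y - x j) powr p + wA j}"
      have C2: "C = {y\<in>\<Omega>. \<forall>j<k. j \<noteq> i \<longrightarrow> norm (y - x i) powr p + wB i < norm (y - x j) powr p + wB j}"
        unfolding C_def
      proof (intro Collect_cong conj_cong refl all_cong imp_cong)
        fix j assume "j < k"
        thus "(norm (y - x i) powr p + wA i < norm (y - x j) powr p + wA j) =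
              (norm (y - x i) powr p + wB i < norm (y - x j) powr p + wB j)" for y
          using eq i by simp
      qed
      have CL: "C \<in> sets lebesgue" unfolding C_def by (intro borel_lebesgue cell_borel \<Omega>_borel)
      have 1: "f_sym_negligible \<Omega> f (A i) C" using A_eq[rule_format, OF i] unfolding C_def wA_def .
      have 2: "f_sym_negligible \<Omega> f (B i) C" using B_eq[rule_format, OF i] unfolding C2 wB_def .
      show "f_sym_negligible \<Omega> f (A i) (B i)"
        by (rule sym_trans[OF \<Omega>_borel f_nonneg f_int _ _ CL 1 2]) (use Ab Bb i borel_lebesgue in auto)
    qed
  qed
qed

end
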